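(* In a strongly causal, digitalizable OPT, for every $\rho\in\mathsf{St}_1(\mathrm{A})$ one has $I(\rho)\ge I^C(\rho)$.
   Context: Framework (operational probabilistic theory, OPT): each system $\mathrm{A}$ has states $\mathsf{St}(\mathrm{A})$ (normalized ones $\mathsf{St}_1(\mathrm{A})$), effects $\mathsf{Eff}(\mathrm{A})$, transformations $\mathsf{Tr}(\mathrm{A}\to\mathrm{B})$ (channels $\mathsf{Tr}_1$), sequential ($\circ$) and parallel ($\boxtimes$) composition, pairing $(a|\rho)$. Strong causality: for every test $\{\mathcal A_i\}$ and tests $\{\mathcal B^i_j\}_j$, $\{\mathcal B^i_j\circ\mathcal A_i\}$ is a test; unique deterministic effect $e_{\mathrm{A}}$. Operational norm $\|\delta\|_{\rm op}:=\sup_{a\in\mathsf{Eff}(\mathrm{A})}((2a-e_{\mathrm{A}})|\delta)$. A refinement of a state $\Omega$ is a collection of states contained in a preparation test summing to $\Omega$. A dilation of $\rho\in\mathsf{St}(\mathrm{A})$ is $\Psi\in\mathsf{St}(\mathrm{A}\mathrm{C})$ with $(\mathcal I_{\mathrm{A}}\boxtimes e_{\mathrm{C}})\Psi=\rho$. Digitalizability: there is an obit system $\mathrm{O}$ such that every system $\mathrm{X}$ can be perfectly encoded via channels into $\mathrm{O}^{\boxtimes k}$ for some finite $k$. Information content: compression scheme $\mathcal E\in\mathsf{Tr}_1(\mathrm{A}^{\boxtimes N}\to\mathrm{O}^{\boxtimes M})$, $\mathcal D\in\mathsf{Tr}_1(\mathrm{O}^{\boxtimes M}\to\mathrm{A}^{\boxtimes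 N})$; $E_{N,M,\varepsilon}(\rho)$ is the set of schemes with $\sup_{\mathrm{C},\{\Psi_i\}}\sum_i\|((\mathcal D\circ\mathcal E)\boxtimes\mathcal I_{\mathrm{C}})\Psi_i-\Psi_i\|_{\rm op}<\varepsilon$, over all systems $\mathrm{C}$ and refinements $\{\Psi_i\}\subseteq\mathsf{St}(\mathrm{A}^{\boxtimes N}\mathrm{C})$ of dilations of $\rho^{\boxtimes N}$; $I(\rho):=\lim_{\varepsilon\to0}\limsup_{N\to\infty}\min\{M:E_{N,M,\varepsilon}(\rho)\ne\emptyset\}/N$. Classical version $I^C$: for a compression scheme $(\mathcal E,\mathcal D)$, a system $\mathrm{C}$, a preparation test $\{\Psi_i\}_{i=1}^n$ of $\mathrm{A}^{\boxtimes N}\mathrm{C}$ with $\sum_i\Psi_i$ a dilation of $\rho^{\boxtimes N}$, and an observation test $\{a_j\}_{j=1}^m$ of $\mathrm{A}^{\boxtimes N}\mathrm{C}$, set $p_{ij}:=(a_j|\Psi_i)$, $q_{ij}:=(a_j|((\mathcal D\circ\mathcal E)\boxtimes\mathcal I_{\mathrm{C}})\Psi_i)$, and let $I(X:Y)=\sum_{ij}p_{ij}\log_2\frac{p_{ij}}{p^X_ip^Y_j}$, $I(X:\tilde Y)=\sum_{ij}q_{ij}\log_2\frac{q_{ij}}{q^X_iq^{\tilde Y}_j}$ be the Shannon mutual informations (marginals $p^X,p^Y,q^X=p^X,q^{\tilde Y}$). $E^C_{N,M,\delta}(\rho)$ is the set of schemes with $\sup_{\mathrm{C},\{\Psi_i\},\{a_j\}}L^{-1}|I(X:Y)-I(X:\tilde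 Y)|<\delta$, where $L=\log_2(mn-1)$ (cases with $m=1$ or $n=1$ give zero difference and are disregarded). $R^C_{\delta,N}(\rho):=\min\{M:E^C_{N,M,\delta}(\rho)\ne\emptyset\}/N$, $R^C_\delta(\rho):=\limsup_{N\to\infty}R^C_{\delta,N}(\rho)$, $I^C(\rho):=\lim_{\delta\to0}R^C_\delta(\rho)$. *)

theory Defs
  imports Complex_Main "HOL-Library.Extended_Real"
begin

text \<open>Systems have type 's, events (transformations; states are events from the trivial
system, effects are events into the trivial system) have type 't.
seqc g f is the sequential composition g o f, parc is parallel composition,
idt A the identity on A, prob maps closed circuits (events I to I) to probabilities.\<close>

record ('s, 't) opt =
  unitS :: 's
  tensS :: "'s \<Rightarrow> 's \<Rightarrow> 's"
  tests :: "'s \<Rightarrow> 's \<Rightarrow> 't list set"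
  seqc  :: "'t \<Rightarrow> 't \<Rightarrow> 't"
  parc  :: "'t \<Rightarrow> 't \<Rightarrow> 't"
  idt   :: "'s \<Rightarrow> 't"
  prob  :: "'t \<Rightarrow> real"

definition Tr :: "('s,'t) opt \<Rightarrow> 's \<Rightarrow> 's \<Rightarrow> 't set" where
  "Tr T A B = {t. \<exists>U\<in>tests T A B. t \<in> set U}"

definition Tr1 :: "('s,'t) opt \<Rightarrow> 's \<Rightarrow> 's \<Rightarrow> 't set" where
  "Tr1 T A B = {t. [t] \<in> tests T A B}"

definition St :: "('s,'t) opt \<Rightarrow> 's \<Rightarrow> 't set" where
  "St T A = Tr T (unitS T) A"

definition St1 :: "('s,'t) opt \<Rightarrow> 's \<Rightarrow> 't set" where
  "St1 T A = Tr1 T (unitS T) A"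

definition Eff :: "('s,'t) opt \<Rightarrow> 's \<Rightarrow> 't set" where
  "Eff T A = Tr T A (unitS T)"

text \<open>Deterministic effect (unique under causality).\<close>
definition detE :: "('s,'t) opt \<Rightarrow> 's \<Rightarrow> 't" where
  "detE T A = (THE e. [e] \<in> tests T A (unitS T))"

definition pair :: "('s,'t) opt \<Rightarrow> 't \<Rightarrow> 't \<Rightarrow> real" where
  "pair T a x = prob T (seqc T a x)"

definition circ :: "('s,'t) opt \<Rightarrow> 's \<Rightarrow> 't \<Rightarrow> 't \<Rightarrow> 't \<Rightarrow> real" where
  "circ T C b f psi = prob T (seqc T b (seqc T (parc T f (idt T C)) psi))"

definition is_opt :: "('s,'t) opt \<Rightarrow> bool" where
  "is_opt T \<longleftrightarrow>
     (\<forall>A. tensS T (unitS T) A = A \<and> tensS T A (unitS T) = A) \<and>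
     (\<forall>A B C. tensS T (tensS T A B) C = tensS T A (tensS T B C)) \<and>
     (\<forall>A. [idt T A] \<in> tests T A A) \<and>
     (\<forall>A B C U V. U \<in> tests T A B \<longrightarrow> V \<in> tests T B C \<longrightarrow>
        [seqc T v u. u \<leftarrow> U, v \<leftarrow> V] \<in> tests T A C) \<and>
     (\<forall>A B C D U V. U \<in> tests T A B \<longrightarrow> V \<in> tests T C D \<longrightarrow>
        [parc T u v. u \<leftarrow> U, v \<leftarrow> V] \<in> tests T (tensS T A C) (tensS T B D)) \<and>
     (\<forall>A B f. f \<in> Tr T A B \<longrightarrow> seqc T f (idt T A) = f \<and> seqc T (idt T B) f = f) \<and>
     (\<forall>A B C D f g h. f \<in> Tr T A B \<longrightarrow> g \<in> Tr T B C \<longrightarrow> h \<in> Tr T C D \<longrightarrow>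
        seqc T h (seqc T g f) = seqc T (seqc T h g) f) \<and>
     (\<forall>A B f. f \<in> Tr T A B \<longrightarrow>
        parc T f (idt T (unitS T)) = f \<and> parc T (idt T (unitS T)) f = f) \<and>
     (\<forall>A B C D E F f g h. f \<in> Tr T A B \<longrightarrow> g \<in> Tr T C D \<longrightarrow> h \<in> Tr T E F \<longrightarrow>
        parc T (parc T f g) h = parc T f (parc T g h)) \<and>
     (\<forall>A B C D E F f g f' g'. f \<in> Tr T A B \<longrightarrow> g \<in> Tr T B C \<longrightarrow>
        f' \<in> Tr T D E \<longrightarrow> g' \<in> Tr T E F \<longrightarrow>
        parc T (seqc T g f) (seqc T g' f') = seqc T (parc T g g') (parc T f f')) \<and>
     (\<forall>A B. parc T (idt T A) (idt T B) = idt T (tensS T A B)) \<and>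
     (\<forall>s t. s \<in> Tr T (unitS T) (unitS T) \<longrightarrow> t \<in> Tr T (unitS T) (unitS T) \<longrightarrow>
        prob T (seqc T s t) = prob T s * prob T t \<and>
        prob T (parc T s t) = prob T s * prob T t) \<and>
     (\<forall>U. U \<in> tests T (unitS T) (unitS T) \<longrightarrow>
        (\<forall>t\<in>set U. 0 \<le> prob T t) \<and> sum_list (map (prob T) U) = 1) \<and>
     \<comment> \<open>operational equivalence: events are identified when they agree in all circuits\<close>
     (\<forall>A B f g. f \<in> Tr T A B \<longrightarrow> g \<in> Tr T A B \<longrightarrow>
        (\<forall>C psi b. psi \<in> St T (tensS T A C) \<longrightarrow> b \<in> Eff T (tensS T B C) \<longrightarrow>
           circ T C b f psi = circ T C b g psi) \<longrightarrow> f = g) \<and>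
     \<comment> \<open>coarse-graining of tests\<close>
     (\<forall>A B U k c. U \<in> tests T A B \<longrightarrow> (\<forall>i<length U. c i < k) \<longrightarrow>
        (\<exists>V\<in>tests T A B. length V = k \<and>
          (\<forall>l<k. \<forall>C psi b. psi \<in> St T (tensS T A C) \<longrightarrow> b \<in> Eff T (tensS T B C) \<longrightarrow>
             circ T C b (V ! l) psi = (\<Sum>i\<in>{i. i < length U \<and> c i = l}. circ T C b (U ! i) psi))))"

definition strongly_causal :: "('s,'t) opt \<Rightarrow> bool" where
  "strongly_causal T \<longleftrightarrow>
     (\<forall>A B C U Vs. U \<in> tests T A B \<longrightarrow> length Vs = length U \<longrightarrow>
        (\<forall>i<length U. Vs ! i \<in> tests T B C) \<longrightarrow>
        concat (map (\<lambda>(u, V). map (\<lambda>v. seqc T v u) V) (zip U Vs)) \<in> tests T A C) \<and>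
     (\<forall>A. \<exists>!e. [e] \<in> tests T A (unitS T))"

fun spow :: "('s,'t) opt \<Rightarrow> 's \<Rightarrow> nat \<Rightarrow> 's" where
  "spow T A 0 = unitS T"
| "spow T A (Suc n) = tensS T A (spow T A n)"

fun tpow :: "('s,'t) opt \<Rightarrow> 't \<Rightarrow> nat \<Rightarrow> 't" where
  "tpow T f 0 = idt T (unitS T)"
| "tpow T f (Suc n) = parc T f (tpow T f n)"

definition digitalizable :: "('s,'t) opt \<Rightarrow> 's \<Rightarrow> bool" where
  "digitalizable T Ob \<longleftrightarrow>
     (\<forall>X. \<exists>k E D. E \<in> Tr1 T X (spow T Ob k) \<and> D \<in> Tr1 T (spow T Ob k) X \<and>
        seqc T D E = idt T X)"

definition opnorm_diff :: "('s,'t) opt \<Rightarrow> 's \<Rightarrow> 't \<Rightarrow> 't \<Rightarrow> real" where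
  "opnorm_diff T A x y =
     Sup ((\<lambda>a. (2 * pair T a x - pair T (detE T A) x) - (2 * pair T a y - pair T (detE T A) y))
          ` Eff T A)"

definition is_dilation :: "('s,'t) opt \<Rightarrow> 's \<Rightarrow> 's \<Rightarrow> 't \<Rightarrow> 't \<Rightarrow> bool" where
  "is_dilation T A C Psi rho \<longleftrightarrow>
     Psi \<in> St T (tensS T A C) \<and> rho \<in> St T A \<and>
     seqc T (parc T (idt T A) (detE T C)) Psi = rho"

definition sums_to :: "('s,'t) opt \<Rightarrow> 's \<Rightarrow> 't list \<Rightarrow> 't \<Rightarrow> bool" where
  "sums_to T S Ps Om \<longleftrightarrow> (\<forall>a\<in>Eff T S. pair T a Om = (\<Sum>x\<leftarrow>Ps. pair T a x))"

definition is_refinement :: "('s,'t) opt \<Rightarrow> 's \<Rightarrow> 't list \<Rightarrow> 't \<Rightarrow> bool" where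
  "is_refinement T S Ps Om \<longleftrightarrow>
     (\<exists>U\<in>tests T (unitS T) S. \<exists>idx. distinct idx \<and> set idx \<subseteq> {..<length U} \<and>
        Ps = map (\<lambda>i. U ! i) idx) \<and> sums_to T S Ps Om"

definition schemes :: "('s,'t) opt \<Rightarrow> 's \<Rightarrow> 's \<Rightarrow> nat \<Rightarrow> nat \<Rightarrow> ('t \<times> 't) set" where
  "schemes T Ob A N M = {(E, D). E \<in> Tr1 T (spow T A N) (spow T Ob M) \<and>
                                 D \<in> Tr1 T (spow T Ob M) (spow T A N)}"

definition refs_of_dil :: "('s,'t) opt \<Rightarrow> 's \<Rightarrow> 't \<Rightarrow> nat \<Rightarrow> ('s \<times> 't list) set" where
  "refs_of_dil T A rho N = {(C, Ps). \<exists>Om. is_dilation T (spow T A N) C Om (tpow T rho N) \<and>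
                               is_refinement T (tensS T (spow T A N) C) Ps Om}"

definition Eset :: "('s,'t) opt \<Rightarrow> 's \<Rightarrow> 's \<Rightarrow> 't \<Rightarrow> nat \<Rightarrow> nat \<Rightarrow> real \<Rightarrow> ('t \<times> 't) set" where
  "Eset T Ob A rho N M eps = {(E, D). (E, D) \<in> schemes T Ob A N M \<and>
     (SUP p\<in>refs_of_dil T A rho N.
        ereal (\<Sum>Psi\<leftarrow>snd p. opnorm_diff T (tensS T (spow T A N) (fst p))
                 (seqc T (parc T (seqc T D E) (idt T (fst p))) Psi) Psi)) < ereal eps}"

definition info :: "('s,'t) opt \<Rightarrow> 's \<Rightarrow> 's \<Rightarrow> 't \<Rightarrow> ereal" where
  "info T Ob A rho = Lim (at_right 0)
     (\<lambda>eps. limsup (\<lambda>N. ereal (real (Inf {M. Eset T Ob A rho N M eps \<noteq> {}}) / real N)))"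

definition mutual_info :: "nat \<Rightarrow> nat \<Rightarrow> (nat \<Rightarrow> nat \<Rightarrow> real) \<Rightarrow> real" where
  "mutual_info n m p = (\<Sum>i<n. \<Sum>j<m.
     (if p i j = 0 then 0
      else p i j * log 2 (p i j / ((\<Sum>j'<m. p i j') * (\<Sum>i'<n. p i' j)))))"

definition classical_setups :: "('s,'t) opt \<Rightarrow> 's \<Rightarrow> 't \<Rightarrow> nat \<Rightarrow> ('s \<times> 't list \<times> 't list) set" where
  "classical_setups T A rho N = {(C, Ps, As).
     Ps \<in> tests T (unitS T) (tensS T (spow T A N) C) \<and>
     (\<exists>Om. is_dilation T (spow T A N) C Om (tpow T rho N) \<and>
           sums_to T (tensS T (spow T A N) C) Ps Om) \<and>
     As \<in> tests T (tensS T (spow T A N) C) (unitS T) \<and>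
     2 \<le> length Ps \<and> 2 \<le> length As}"

definition mi_gap :: "('s,'t) opt \<Rightarrow> 't \<Rightarrow> 't \<Rightarrow> 's \<Rightarrow> 't list \<Rightarrow> 't list \<Rightarrow> real" where
  "mi_gap T E D C Ps As =
     (let n = length Ps; m = length As;
          p = (\<lambda>i j. pair T (As ! j) (Ps ! i));
          q = (\<lambda>i j. pair T (As ! j) (seqc T (parc T (seqc T D E) (idt T C)) (Ps ! i)))
      in \<bar>mutual_info n m p - mutual_info n m q\<bar> / log 2 (real (m * n) - 1))"

definition EsetC :: "('s,'t) opt \<Rightarrow> 's \<Rightarrow> 's \<Rightarrow> 't \<Rightarrow> nat \<Rightarrow> nat \<Rightarrow> real \<Rightarrow> ('t \<times> 't) set" where
  "EsetC T Ob A rho N M delta = {(E, D). (E, D) \<in> schemes T Ob A N M \<and>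
     (SUP s\<in>classical_setups T A rho N.
        ereal (mi_gap T E D (fst s) (fst (snd s)) (snd (snd s)))) < ereal delta}"

definition infoC :: "('s,'t) opt \<Rightarrow> 's \<Rightarrow> 's \<Rightarrow> 't \<Rightarrow> ereal" where
  "infoC T Ob A rho = Lim (at_right 0)
     (\<lambda>delta. limsup (\<lambda>N. ereal (real (Inf {M. EsetC T Ob A rho N M delta \<noteq> {}}) / real N)))"

end

theory Submission
  imports Defs
begin


lemma antitone_tendsto_SUP:
  fixes h :: "real \<Rightarrow> ereal"
  assumes mono: "\<And>x y. 0 < x \<Longrightarrow> x \<le> y \<Longrightarrow> h y \<le> h x"
  shows "(h \<longlongrightarrow> (SUP e\<in>{0<..}. h e)) (at_right 0)"
proof (rule order_tendstoI)
  fix a assume "a < (SUP e\<in>{0<..}. h e)"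
  then obtain x0 where x0: "x0 > 0" "a < h x0" by (auto simp: less_SUP_iff)
  show "\<forall>\<^sub>F x in at_right 0. a < h x"
    unfolding eventually_at_right_field
    using x0 mono by (intro exI[of _ x0]) (auto intro: less_le_trans)
next
  fix a assume "(SUP e\<in>{0<..}. h e) < a"
  then have "\<And>x. x > 0 \<Longrightarrow> h x < a"
    by (meson SUP_upper greaterThan_iff le_less_trans)
  then show "\<forall>\<^sub>F x in at_right 0. h x < a"
    unfolding eventually_at_right_field by (intro exI[of _ 1]) auto
qed

lemma Lim_antitone:
  fixes h :: "real \<Rightarrow> ereal"
  assumes mono: "\<And>x y. 0 < x \<Longrightarrow> x \<le> y \<Longrightarrow> h y \<le> h x"
  shows "Lim (at_right 0) h = (SUP e\<in>{0<..}. h e)"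
  by (rule tendsto_Lim[OF trivial_limit_at_right_real antitone_tendsto_SUP[OF mono]])

lemma Inf_nat_mono:
  fixes A B :: "nat set"
  assumes "A \<subseteq> B" "A \<noteq> {}"
  shows "Inf B \<le> Inf A"
  using assms by (intro cInf_superset_mono) auto

lemma limsup_Inf_mono:
  fixes P Q :: "nat \<Rightarrow> nat \<Rightarrow> bool"
  assumes "\<And>N M. P N M \<Longrightarrow> Q N M" "\<And>N. \<exists>M. P N M"
  shows "limsup (\<lambda>N. ereal (real (Inf {M. Q N M}) / real N))
       \<le> limsup (\<lambda>N. ereal (real (Inf {M. P N M}) / real N))"
proof (rule Limsup_mono, rule always_eventually, rule allI)
  fix N
  have "Inf {M. Q N M} \<le> Inf {M. P N M}"
    using assms by (intro Inf_nat_mono) auto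
  then show "ereal (real (Inf {M. Q N M}) / real N) \<le> ereal (real (Inf {M. P N M}) / real N)"
    by (simp add: divide_right_mono)
qed




definition phi :: "real \<Rightarrow> real" where "phi x = - x * ln x"

lemma phi_diff_aux:
  assumes "0 \<le> x" "x \<le> y" "y \<le> 1"
  shows "phi y - phi x \<le> phi (y - x)" "- (y - x) \<le> phi y - phi x"
proof -
  have "phi y - phi x \<le> phi (y - x) \<and> - (y - x) \<le> phi y - phi x"
  proof (cases "x = 0")
    case True
    have "y * ln y \<le> 0"
    proof (cases "y = 0")
      case False then show ?thesis using assms by (simp add: mult_nonneg_nonpos)
    qed simp
    then show ?thesis using True assms by (simp add: phi_def)
  next
    case False
    then have x0: "x > 0" using assms by auto
    then have y0: "y > 0" using assms by auto
    have eq: "phi y - phi x = - x * (ln y - ln x) - (y - x) * ln y"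
      by (simp add: phi_def algebra_simps)
    have l1: "ln y - ln x \<ge> 0" using x0 assms by simp
    have l2: "ln y - ln x \<le> (y - x) / x"
    proof -
      have "ln y - ln x = ln (y / x)" using x0 y0 by (simp add: ln_div)
      also have "\<dots> \<le> y / x - 1" using x0 y0 by (intro ln_le_minus_one) simp
      also have "\<dots> = (y - x) / x" using x0 by (simp add: diff_divide_distrib)
      finally show ?thesis .
    qed
    have l3: "ln y \<le> 0" using y0 assms by simp
    have up: "phi y - phi x \<le> phi (y - x)"
    proof (cases "y = x")
      case True then show ?thesis by (simp add: phi_def)
    next
      case False
      then have d0: "y - x > 0" using assms by simp
      have "ln (y - x) \<le> ln y" using d0 x0 by simp
      then have "- (y - x) * ln y \<le> - (y - x) * ln (y - x)"
        using d0 by (simp add: mult_le_cancel_left)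
      moreover have "- x * (ln y - ln x) \<le> 0" using x0 l1 by (simp add: mult_nonneg_nonneg)
      moreover have "phi (y - x) = - (y - x) * ln (y - x)" by (simp add: phi_def)
      ultimately show ?thesis using eq by linarith
    qed
    have lo: "- (y - x) \<le> phi y - phi x"
    proof -
      have "x * (ln y - ln x) \<le> x * ((y - x) / x)" using x0 l2 by (intro mult_left_mono) auto
      moreover have "x * ((y - x) / x) = y - x" using x0 by simp
      ultimately have "x * (ln y - ln x) \<le> y - x" by linarith
      moreover have "(y - x) * ln y \<le> 0" using assms l3 by (simp add: mult_nonneg_nonpos)
      ultimately show ?thesis unfolding eq by linarith
    qed
    show ?thesis using up lo by simp
  qed
  then show "phi y - phi x \<le> phi (y - x)" "- (y - x) \<le> phi y - phi x" by auto
qed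

lemma phi_0 [simp]: "phi 0 = 0" by (simp add: phi_def)

lemma phi_nonneg: "0 \<le> t \<Longrightarrow> t \<le> 1 \<Longrightarrow> 0 \<le> phi t"
  by (cases "t = 0") (auto simp: phi_def mult_nonneg_nonpos ln_le_zero_iff)

lemma phi_diff:
  assumes "0 \<le> x" "x \<le> 1" "0 \<le> y" "y \<le> 1"
  shows "\<bar>phi x - phi y\<bar> \<le> phi \<bar>x - y\<bar> + \<bar>x - y\<bar>"
proof (cases "x \<le> y")
  case True
  from phi_diff_aux[OF assms(1) True assms(4)] phi_nonneg[of "y - x"] True assms
  show ?thesis by (auto simp: abs_if)
next
  case False
  then have "y \<le> x" by simp
  from phi_diff_aux[OF assms(3) this assms(2)] phi_nonneg[of "x - y"] False assms
  show ?thesis by (auto simp: abs_if)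
qed

lemma phi_term:
  assumes "0 \<le> t" "0 < T" "0 < K"
  shows "phi t \<le> T / K - t + t * ln K - t * ln T"
proof (cases "t = 0")
  case True then show ?thesis using assms by (simp add: phi_def)
next
  case False
  then have t0: "t > 0" using assms by simp
  have "ln (T / (K * t)) \<le> T / (K * t) - 1" using t0 assms by (intro ln_le_minus_one) simp
  then have "t * ln (T / (K * t)) \<le> t * (T / (K * t) - 1)" using t0 by (simp add: mult_left_mono)
  also have "\<dots> = T / K - t" using t0 assms by (simp add: right_diff_distrib)
  finally have *: "t * ln (T / (K * t)) \<le> T / K - t" .
  have "ln (T / (K * t)) = ln T - ln K - ln t" using t0 assms by (simp add: ln_div ln_mult)
  then have "t * ln (T / (K * t)) = t * (ln T - ln K - ln t)" by simp
  then have "t * ln (T / (K * t)) = t * ln T - t * ln K - t * ln t" by (simp add: right_diff_distrib)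
  then show ?thesis using * unfolding phi_def by linarith
qed

lemma sum_phi_le:
  assumes fin: "finite I" and ne: "I \<noteq> {}" and nn: "\<And>k. k \<in> I \<Longrightarrow> 0 \<le> t k"
  shows "(\<Sum>k\<in>I. phi (t k)) \<le> (\<Sum>k\<in>I. t k) * ln (card I) + phi (\<Sum>k\<in>I. t k)"
proof (cases "(\<Sum>k\<in>I. t k) = 0")
  case True
  then have "\<forall>k\<in>I. t k = 0" using sum_nonneg_eq_0_iff[OF fin] nn by blast
  then show ?thesis by (simp add: phi_def)
next
  case False
  let ?T = "(\<Sum>k\<in>I. t k)"
  have T0: "?T > 0" using False sum_nonneg[of I t] nn by force
  have K0: "real (card I) > 0" using fin ne by (simp add: card_gt_0_iff)
  have "(\<Sum>k\<in>I. phi (t k)) \<le> (\<Sum>k\<in>I. ?T / card I - t k + t k * ln (card I) - t k * ln ?T)"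
    by (intro sum_mono phi_term nn T0 K0)
  also have "\<dots> = (\<Sum>k\<in>I. ?T / card I) - ?T + ?T * ln (card I) - ?T * ln ?T"
    by (simp add: sum.distrib sum_subtractf sum_distrib_right)
  also have "(\<Sum>k\<in>I. ?T / card I) = ?T" using K0 by simp
  finally show ?thesis by (simp add: phi_def)
qed

lemma ent_cont:
  assumes fin: "finite I" and ne: "I \<noteq> {}"
    and x: "\<And>k. k \<in> I \<Longrightarrow> 0 \<le> x k \<and> x k \<le> 1"
    and y: "\<And>k. k \<in> I \<Longrightarrow> 0 \<le> y k \<and> y k \<le> 1"
  shows "\<bar>(\<Sum>k\<in>I. phi (x k)) - (\<Sum>k\<in>I. phi (y k))\<bar>
     \<le> (\<Sum>k\<in>I. \<bar>x k - y k\<bar>) * ln (card I) + phi (\<Sum>k\<in>I. \<bar>x k - y k\<bar>) + (\<Sum>k\<in>I. \<bar>x k - y k\<bar>)"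
proof -
  have "\<bar>(\<Sum>k\<in>I. phi (x k)) - (\<Sum>k\<in>I. phi (y k))\<bar> = \<bar>\<Sum>k\<in>I. phi (x k) - phi (y k)\<bar>"
    by (simp add: sum_subtractf)
  also have "\<dots> \<le> (\<Sum>k\<in>I. \<bar>phi (x k) - phi (y k)\<bar>)" by (rule sum_abs)
  also have "\<dots> \<le> (\<Sum>k\<in>I. phi \<bar>x k - y k\<bar> + \<bar>x k - y k\<bar>)"
    using x y by (intro sum_mono phi_diff) auto
  also have "\<dots> = (\<Sum>k\<in>I. phi \<bar>x k - y k\<bar>) + (\<Sum>k\<in>I. \<bar>x k - y k\<bar>)" by (simp add: sum.distrib)
  also have "\<dots> \<le> (\<Sum>k\<in>I. \<bar>x k - y k\<bar>) * ln (card I) + phi (\<Sum>k\<in>I. \<bar>x k - y k\<bar>) + (\<Sum>k\<in>I. \<bar>x k - y k\<bar>)"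
    using sum_phi_le[OF fin ne, of "\<lambda>k. \<bar>x k - y k\<bar>"] by simp
  finally show ?thesis .
qed

lemma phi_le_sqrt:
  assumes "0 \<le> t" shows "phi t \<le> 2 * sqrt t"
proof (cases "t = 0")
  case True then show ?thesis by (simp add: phi_def)
next
  case False
  then have t0: "t > 0" using assms by simp
  then have s0: "sqrt t > 0" by simp
  have "ln (1 / sqrt t) \<le> 1 / sqrt t - 1" using s0 by (intro ln_le_minus_one) simp
  moreover have "ln t = 2 * ln (sqrt t)" using t0 less_eq_real_def ln_sqrt by fastforce
  moreover have "ln (1 / sqrt t) = - ln (sqrt t)" using s0 by (simp add: ln_div)
  ultimately have "- ln t \<le> 2 * (1 / sqrt t)" by linarith
  then have "t * (- ln t) \<le> t * (2 * (1 / sqrt t))" using t0 by (intro mult_left_mono) auto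
  also have "t * (2 * (1 / sqrt t)) = 2 * sqrt t" using t0
  proof -
    have "t * (2 * (1 / sqrt t)) = 2 * (t / sqrt t)" by simp
    also have "t / sqrt t = sqrt t" using t0 by (simp add: real_div_sqrt)
    finally show ?thesis .
  qed
  finally show ?thesis by (simp add: phi_def)
qed

lemma ent_cont2:
  assumes fin: "finite I" and ne: "I \<noteq> {}"
    and x: "\<And>k. k \<in> I \<Longrightarrow> 0 \<le> x k \<and> x k \<le> 1"
    and y: "\<And>k. k \<in> I \<Longrightarrow> 0 \<le> y k \<and> y k \<le> 1"
    and le: "(\<Sum>k\<in>I. \<bar>x k - y k\<bar>) \<le> s"
  shows "\<bar>(\<Sum>k\<in>I. phi (x k)) - (\<Sum>k\<in>I. phi (y k))\<bar> \<le> s * ln (card I) + 2 * sqrt s + s"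
proof -
  let ?T = "(\<Sum>k\<in>I. \<bar>x k - y k\<bar>)"
  have T0: "0 \<le> ?T" by (simp add: sum_nonneg)
  have K: "0 \<le> ln (real (card I))" using fin ne by (simp add: card_gt_0_iff Suc_le_eq)
  have "?T * ln (card I) \<le> s * ln (card I)" using le K by (simp add: mult_right_mono)
  moreover have "phi ?T \<le> 2 * sqrt s"
  proof -
    have "sqrt ?T \<le> sqrt s" using le by simp
    then show ?thesis using phi_le_sqrt[OF T0] by linarith
  qed
  moreover have "\<bar>(\<Sum>k\<in>I. phi (x k)) - (\<Sum>k\<in>I. phi (y k))\<bar>
     \<le> ?T * ln (card I) + phi ?T + ?T"
    by (rule ent_cont[OF fin ne]) (use x y in auto)
  ultimately show ?thesis using le by linarith
qed




lemma sum_nonneg_le_total: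
  fixes f :: "'a \<Rightarrow> real"
  assumes "finite A" "i \<in> A" "\<And>x. x \<in> A \<Longrightarrow> 0 \<le> f x"
  shows "f i \<le> sum f A"
  using assms by (intro member_le_sum) auto

lemma mi_term:
  fixes p a b :: real
  assumes "0 \<le> p" "p \<le> a" "p \<le> b"
  shows "(if p = 0 then 0 else p * log 2 (p / (a * b))) * ln 2 = - phi p - p * ln a - p * ln b"
proof (cases "p = 0")
  case True then show ?thesis by (simp add: phi_def)
next
  case False
  then have "p > 0" "a > 0" "b > 0" using assms by auto
  then have e1: "ln (p / (a * b)) = ln p - ln a - ln b" by (simp add: ln_div ln_mult)
  have e2: "log 2 (p / (a * b)) * ln 2 = ln (p / (a * b))" by (simp add: log_def)
  have "(p * log 2 (p / (a * b))) * ln 2 = p * (log 2 (p / (a * b)) * ln 2)" by (simp only: mult.assoc)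
  also have "\<dots> = p * (ln p - ln a - ln b)" by (simp only: e2 e1)
  also have "\<dots> = - phi p - p * ln a - p * ln b" by (simp add: phi_def right_diff_distrib)
  finally show ?thesis using False by simp
qed

lemma mi_decomp:
  fixes p :: "nat \<Rightarrow> nat \<Rightarrow> real"
  assumes nn: "\<And>i j. i < n \<Longrightarrow> j < m \<Longrightarrow> 0 \<le> p i j"
  shows "mutual_info n m p * ln 2 =
     (\<Sum>i<n. phi (\<Sum>j<m. p i j)) + (\<Sum>j<m. phi (\<Sum>i<n. p i j)) - (\<Sum>i<n. \<Sum>j<m. phi (p i j))"
proof -
  have "mutual_info n m p * ln 2 = (\<Sum>i<n. \<Sum>j<m.
     (if p i j = 0 then 0 else p i j * log 2 (p i j / ((\<Sum>j'<m. p i j') * (\<Sum>i'<n. p i' j)))) * ln 2)"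
    unfolding mutual_info_def by (simp add: sum_distrib_right)
  also have "\<dots> = (\<Sum>i<n. \<Sum>j<m. - phi (p i j) - p i j * ln (\<Sum>j'<m. p i j') - p i j * ln (\<Sum>i'<n. p i' j))"
  proof (intro sum.cong refl)
    fix i j assume ij: "i \<in> {..<n}" "j \<in> {..<m}"
    show "(if p i j = 0 then 0 else p i j * log 2 (p i j / ((\<Sum>j'<m. p i j') * (\<Sum>i'<n. p i' j)))) * ln 2
        = - phi (p i j) - p i j * ln (\<Sum>j'<m. p i j') - p i j * ln (\<Sum>i'<n. p i' j)"
    proof (rule mi_term)
      show "0 \<le> p i j" using ij nn by auto
      show "p i j \<le> (\<Sum>j'<m. p i j')"
        using ij nn by (intro sum_nonneg_le_total[of _ _ "\<lambda>j'. p i j'"]) auto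
      show "p i j \<le> (\<Sum>i'<n. p i' j)"
        using ij nn by (intro sum_nonneg_le_total[of _ _ "\<lambda>i'. p i' j"]) auto
    qed
  qed
  also have "\<dots> = - (\<Sum>i<n. \<Sum>j<m. phi (p i j)) - (\<Sum>i<n. \<Sum>j<m. p i j * ln (\<Sum>j'<m. p i j'))
       - (\<Sum>i<n. \<Sum>j<m. p i j * ln (\<Sum>i'<n. p i' j))"
    by (simp add: sum_subtractf sum_negf)
  also have "(\<Sum>i<n. \<Sum>j<m. p i j * ln (\<Sum>j'<m. p i j')) = - (\<Sum>i<n. phi (\<Sum>j<m. p i j))"
    by (simp add: phi_def sum_distrib_right[symmetric] sum_negf)
  also have "(\<Sum>i<n. \<Sum>j<m. p i j * ln (\<Sum>i'<n. p i' j)) = - (\<Sum>j<m. phi (\<Sum>i<n. p i j))"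
    by (subst sum.swap) (simp add: phi_def sum_distrib_right[symmetric] sum_negf)
  finally show ?thesis by simp
qed




lemma ln_3_ge_1: "1 \<le> ln (3::real)"
proof -
  have "ln (exp 1) \<le> ln (3::real)" using exp_le by (subst ln_le_cancel_iff) auto
  then show ?thesis by simp
qed

lemma mi_cont:
  fixes p q :: "nat \<Rightarrow> nat \<Rightarrow> real"
  assumes n2: "2 \<le> n" and m2: "2 \<le> m"
    and pn: "\<And>i j. i < n \<Longrightarrow> j < m \<Longrightarrow> 0 \<le> p i j"
    and qn: "\<And>i j. i < n \<Longrightarrow> j < m \<Longrightarrow> 0 \<le> q i j"
    and p1: "(\<Sum>i<n. \<Sum>j<m. p i j) = 1"
    and q1: "(\<Sum>i<n. \<Sum>j<m. q i j) = 1"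
    and tv: "(\<Sum>i<n. \<Sum>j<m. \<bar>p i j - q i j\<bar>) \<le> s"
    and s1: "s \<le> 1"
  shows "\<bar>mutual_info n m p - mutual_info n m q\<bar> / log 2 (real (m * n) - 1) \<le> 13 * sqrt s"
proof -
  have s0: "0 \<le> s" using tv by (meson order_trans sum_nonneg abs_ge_zero)
  have rowle: "(\<Sum>j<m. r i j) \<le> 1" if "i < n" "\<And>i j. i < n \<Longrightarrow> j < m \<Longrightarrow> 0 \<le> r i j"
    "(\<Sum>i<n. \<Sum>j<m. r i j) = 1" for r :: "nat \<Rightarrow> nat \<Rightarrow> real" and i
  proof -
    have "(\<Sum>j<m. r i j) \<le> (\<Sum>i<n. \<Sum>j<m. r i j)"
      using that by (intro sum_nonneg_le_total[of _ _ "\<lambda>i. \<Sum>j<m. r i j"]) (auto intro: sum_nonneg)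
    then show ?thesis using that by simp
  qed
  have colle: "(\<Sum>i<n. r i j) \<le> 1" if "j < m" "\<And>i j. i < n \<Longrightarrow> j < m \<Longrightarrow> 0 \<le> r i j"
    "(\<Sum>i<n. \<Sum>j<m. r i j) = 1" for r :: "nat \<Rightarrow> nat \<Rightarrow> real" and j
  proof -
    have "(\<Sum>i<n. r i j) \<le> (\<Sum>j<m. \<Sum>i<n. r i j)"
      using that by (intro sum_nonneg_le_total[of _ _ "\<lambda>j. \<Sum>i<n. r i j"]) (auto intro: sum_nonneg)
    then show ?thesis using that by (simp add: sum.swap[of _ "{..<m}"])
  qed
  have entle: "r i j \<le> 1" if "i < n" "j < m" "\<And>i j. i < n \<Longrightarrow> j < m \<Longrightarrow> 0 \<le> r i j"
    "(\<Sum>i<n. \<Sum>j<m. r i j) = 1" for r :: "nat \<Rightarrow> nat \<Rightarrow> real" and i j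
  proof -
    have "r i j \<le> (\<Sum>j<m. r i j)"
      using that by (intro sum_nonneg_le_total[of _ _ "\<lambda>j. r i j"]) auto
    then show ?thesis using rowle[of i r] that by simp
  qed
  have tvX: "(\<Sum>i<n. \<bar>(\<Sum>j<m. p i j) - (\<Sum>j<m. q i j)\<bar>) \<le> s"
  proof -
    have "(\<Sum>i<n. \<bar>(\<Sum>j<m. p i j) - (\<Sum>j<m. q i j)\<bar>) \<le> (\<Sum>i<n. \<Sum>j<m. \<bar>p i j - q i j\<bar>)"
      by (intro sum_mono) (metis sum_abs sum_subtractf)
    then show ?thesis using tv by linarith
  qed
  have tvY: "(\<Sum>j<m. \<bar>(\<Sum>i<n. p i j) - (\<Sum>i<n. q i j)\<bar>) \<le> s"
  proof -
    have "(\<Sum>j<m. \<bar>(\<Sum>i<n. p i j) - (\<Sum>i<n. q i j)\<bar>) \<le> (\<Sum>j<m. \<Sum>i<n. \<bar>p i j - q i j\<bar>)"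
      by (intro sum_mono) (metis sum_abs sum_subtractf)
    also have "\<dots> = (\<Sum>i<n. \<Sum>j<m. \<bar>p i j - q i j\<bar>)" by (rule sum.swap)
    finally show ?thesis using tv by linarith
  qed
  have n0: "{..<n} \<noteq> {}" "{..<m} \<noteq> {}"
  proof -
    have "0 \<in> {..<n}" "0 \<in> {..<m}" using n2 m2 by auto
    then show "{..<n} \<noteq> {}" "{..<m} \<noteq> {}" by blast+
  qed
  have EX0: "\<bar>(\<Sum>i<n. phi (\<Sum>j<m. p i j)) - (\<Sum>i<n. phi (\<Sum>j<m. q i j))\<bar> \<le> s * ln (card {..<n}) + 2 * sqrt s + s"
  proof (rule ent_cont2[OF finite_lessThan n0(1)])
    show "0 \<le> (\<Sum>j<m. p k j) \<and> (\<Sum>j<m. p k j) \<le> 1" if "k \<in> {..<n}" for k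
      using that pn rowle[of k p] p1 by (auto intro: sum_nonneg)
    show "0 \<le> (\<Sum>j<m. q k j) \<and> (\<Sum>j<m. q k j) \<le> 1" if "k \<in> {..<n}" for k
      using that qn rowle[of k q] q1 by (auto intro: sum_nonneg)
  qed (rule tvX)
  then have EX: "\<bar>(\<Sum>i<n. phi (\<Sum>j<m. p i j)) - (\<Sum>i<n. phi (\<Sum>j<m. q i j))\<bar> \<le> s * ln n + 2 * sqrt s + s"
    by simp
  have EY0: "\<bar>(\<Sum>j<m. phi (\<Sum>i<n. p i j)) - (\<Sum>j<m. phi (\<Sum>i<n. q i j))\<bar> \<le> s * ln (card {..<m}) + 2 * sqrt s + s"
  proof (rule ent_cont2[OF finite_lessThan n0(2)])
    show "0 \<le> (\<Sum>i<n. p i k) \<and> (\<Sum>i<n. p i k) \<le> 1" if "k \<in> {..<m}" for k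
      using that pn colle[of k p] p1 by (auto intro: sum_nonneg)
    show "0 \<le> (\<Sum>i<n. q i k) \<and> (\<Sum>i<n. q i k) \<le> 1" if "k \<in> {..<m}" for k
      using that qn colle[of k q] q1 by (auto intro: sum_nonneg)
  qed (rule tvY)
  then have EY: "\<bar>(\<Sum>j<m. phi (\<Sum>i<n. p i j)) - (\<Sum>j<m. phi (\<Sum>i<n. q i j))\<bar> \<le> s * ln m + 2 * sqrt s + s"
    by simp
  let ?I = "{..<n} \<times> {..<m}"
  have cart: "\<And>f :: nat \<Rightarrow> nat \<Rightarrow> real. (\<Sum>i<n. \<Sum>j<m. f i j) = (\<Sum>k\<in>?I. f (fst k) (snd k))"
    by (simp add: sum.cartesian_product case_prod_beta)
  have EXY: "\<bar>(\<Sum>i<n. \<Sum>j<m. phi (p i j)) - (\<Sum>i<n. \<Sum>j<m. phi (q i j))\<bar> \<le> s * ln (n * m) + 2 * sqrt s + s"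
  proof -
    have "\<bar>(\<Sum>k\<in>?I. phi (p (fst k) (snd k))) - (\<Sum>k\<in>?I. phi (q (fst k) (snd k)))\<bar>
        \<le> s * ln (card ?I) + 2 * sqrt s + s"
    proof (rule ent_cont2)
      show "finite ?I" by simp
      show "?I \<noteq> {}" using n0 by simp
      show "0 \<le> p (fst k) (snd k) \<and> p (fst k) (snd k) \<le> 1" if "k \<in> ?I" for k
        using that pn entle[of "fst k" "snd k" p] p1 by auto
      show "0 \<le> q (fst k) (snd k) \<and> q (fst k) (snd k) \<le> 1" if "k \<in> ?I" for k
        using that qn entle[of "fst k" "snd k" q] q1 by auto
      show "(\<Sum>k\<in>?I. \<bar>p (fst k) (snd k) - q (fst k) (snd k)\<bar>) \<le> s"
        using tv cart[of "\<lambda>i j. \<bar>p i j - q i j\<bar>"] by simp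
    qed
    then show ?thesis using cart[of "\<lambda>i j. phi (p i j)"] cart[of "\<lambda>i j. phi (q i j)"]
      by (simp add: card_cartesian_product)
  qed
  have D: "\<bar>mutual_info n m p - mutual_info n m q\<bar> * ln 2 \<le> 2 * s * ln (n * m) + 6 * sqrt s + 3 * s"
  proof -
    have "\<bar>mutual_info n m p - mutual_info n m q\<bar> * ln 2
        = \<bar>mutual_info n m p * ln 2 - mutual_info n m q * ln 2\<bar>"
      by (subst abs_mult_pos) (simp_all add: left_diff_distrib)
    also have "\<dots> \<le> s * ln n + s * ln m + s * ln (n * m) + 6 * sqrt s + 3 * s"
    proof -
      have dp: "mutual_info n m p * ln 2 = (\<Sum>i<n. phi (\<Sum>j<m. p i j)) + (\<Sum>j<m. phi (\<Sum>i<n. p i j)) - (\<Sum>i<n. \<Sum>j<m. phi (p i j))"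
        by (rule mi_decomp) (rule pn)
      have dq: "mutual_info n m q * ln 2 = (\<Sum>i<n. phi (\<Sum>j<m. q i j)) + (\<Sum>j<m. phi (\<Sum>i<n. q i j)) - (\<Sum>i<n. \<Sum>j<m. phi (q i j))"
        by (rule mi_decomp) (rule qn)
      show ?thesis unfolding dp dq using EX EY EXY by (smt (verit))
    qed
    also have "s * ln n + s * ln m = s * ln (n * m)" using n2 m2 by (simp add: ln_mult distrib_left)
    finally show ?thesis by simp
  qed
  define L where "L = real (m * n) - 1"
  have L3: "3 \<le> L"
  proof -
    have "4 \<le> m * n" using mult_le_mono[OF m2 n2] by simp
    then have "(4::real) \<le> real (m * n)" by linarith
    then show ?thesis unfolding L_def by simp
  qed
  have lnL: "1 \<le> ln L"
  proof -
    have "ln 3 \<le> ln L" using L3 by (subst ln_le_cancel_iff) auto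
    then show ?thesis using ln_3_ge_1 by linarith
  qed
  have "real n * real m \<le> L * L"
  proof -
    have "real n * real m = L + 1" unfolding L_def by simp
    also have "\<dots> \<le> L * L"
    proof -
      have "3 * L \<le> L * L" using L3 by (intro mult_right_mono) auto
      then show ?thesis using L3 by linarith
    qed
    finally show ?thesis .
  qed
  then have lnnm: "ln (real (n * m)) \<le> 2 * ln L"
  proof -
    assume a: "real n * real m \<le> L * L"
    have pos: "0 < real n * real m" using n2 m2 by simp
    have "ln (real (n * m)) \<le> ln (L * L)" using a pos L3 by (subst ln_le_cancel_iff) auto
    also have "ln (L * L) = 2 * ln L" using L3 by (simp add: ln_mult)
    finally show ?thesis .
  qed
  have "\<bar>mutual_info n m p - mutual_info n m q\<bar> / log 2 L
      = \<bar>mutual_info n m p - mutual_info n m q\<bar> * ln 2 / ln L"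
    by (simp add: log_def)
  also have "\<dots> \<le> (2 * s * ln (n * m) + 6 * sqrt s + 3 * s) / ln L"
    using D lnL by (intro divide_right_mono) auto
  also have "\<dots> = 2 * s * ln (n * m) / ln L + (6 * sqrt s + 3 * s) / ln L"
    by (simp add: add_divide_distrib)
  also have "2 * s * ln (n * m) / ln L \<le> 4 * s"
  proof -
    have "2 * s * ln (n * m) \<le> 2 * s * (2 * ln L)" using lnnm s0 by (intro mult_left_mono) auto
    then show ?thesis using lnL by (simp add: divide_le_eq)
  qed
  also have "(6 * sqrt s + 3 * s) / ln L \<le> 6 * sqrt s + 3 * s"
  proof -
    have x0: "0 \<le> 6 * sqrt s + 3 * s" using s0 by simp
    have "(6 * sqrt s + 3 * s) * 1 \<le> (6 * sqrt s + 3 * s) * ln L" using lnL x0 by (intro mult_left_mono) auto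
    then show ?thesis using lnL by (simp add: divide_le_eq)
  qed
  finally have fin: "\<bar>mutual_info n m p - mutual_info n m q\<bar> / log 2 L \<le> 4 * s + (6 * sqrt s + 3 * s)"
    by simp
  have "s \<le> sqrt s"
  proof -
    have "sqrt s * sqrt s \<le> sqrt s" using s0 s1 by (intro mult_right_le_one_le) auto
    then show ?thesis using s0 by simp
  qed
  with fin show ?thesis unfolding L_def by simp
qed




context
  fixes T :: "('s, 't) opt"
  assumes opt: "is_opt T"
begin

lemma tens_unit: "tensS T (unitS T) A = A" "tensS T A (unitS T) = A"
  using opt[unfolded is_opt_def, THEN conjunct1] by simp_all

lemma id_test: "[idt T A] \<in> tests T A A"
  using opt[unfolded is_opt_def, THEN conjunct2, THEN conjunct2, THEN conjunct1] by simp

lemma seq_test: "U \<in> tests T A B \<Longrightarrow> V \<in> tests T B C \<Longrightarrow>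
        [seqc T v u. u \<leftarrow> U, v \<leftarrow> V] \<in> tests T A C"
  using opt[unfolded is_opt_def, THEN conjunct2, THEN conjunct2, THEN conjunct2, THEN conjunct1] by blast

lemma par_test: "U \<in> tests T A B \<Longrightarrow> V \<in> tests T C D \<Longrightarrow>
        [parc T u v. u \<leftarrow> U, v \<leftarrow> V] \<in> tests T (tensS T A C) (tensS T B D)"
  using opt[unfolded is_opt_def, THEN conjunct2, THEN conjunct2, THEN conjunct2, THEN conjunct2, THEN conjunct1] by blast

lemma seq_id: "f \<in> Tr T A B \<Longrightarrow> seqc T f (idt T A) = f \<and> seqc T (idt T B) f = f"
  using opt[unfolded is_opt_def, THEN conjunct2, THEN conjunct2, THEN conjunct2, THEN conjunct2, THEN conjunct2, THEN conjunct1] by blast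

lemma par_id_unit: "f \<in> Tr T A B \<Longrightarrow> parc T f (idt T (unitS T)) = f"
  using opt[unfolded is_opt_def, THEN conjunct2, THEN conjunct2, THEN conjunct2, THEN conjunct2, THEN conjunct2, THEN conjunct2, THEN conjunct2, THEN conjunct1] by blast

lemma par_idt: "parc T (idt T A) (idt T B) = idt T (tensS T A B)"
  using opt[unfolded is_opt_def, THEN conjunct2, THEN conjunct2, THEN conjunct2, THEN conjunct2, THEN conjunct2, THEN conjunct2, THEN conjunct2, THEN conjunct2, THEN conjunct2, THEN conjunct2, THEN conjunct1] by blast

lemma prob_test: "U \<in> tests T (unitS T) (unitS T) \<Longrightarrow>
        (\<forall>t\<in>set U. 0 \<le> prob T t) \<and> sum_list (map (prob T) U) = 1"
  using opt[unfolded is_opt_def, THEN conjunct2, THEN conjunct2, THEN conjunct2, THEN conjunct2, THEN conjunct2, THEN conjunct2, THEN conjunct2, THEN conjunct2, THEN conjunct2, THEN conjunct2, THEN conjunct2, THEN conjunct2, THEN conjunct1] by blast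

lemma coarse: "U \<in> tests T A B \<Longrightarrow> (\<forall>i<length U. c i < k) \<Longrightarrow>
        (\<exists>V\<in>tests T A B. length V = k \<and>
          (\<forall>l<k. \<forall>C psi b. psi \<in> St T (tensS T A C) \<longrightarrow> b \<in> Eff T (tensS T B C) \<longrightarrow>
             circ T C b (V ! l) psi = (\<Sum>i\<in>{i. i < length U \<and> c i = l}. circ T C b (U ! i) psi)))"
  using opt[unfolded is_opt_def, THEN conjunct2, THEN conjunct2, THEN conjunct2, THEN conjunct2, THEN conjunct2, THEN conjunct2, THEN conjunct2, THEN conjunct2, THEN conjunct2, THEN conjunct2, THEN conjunct2, THEN conjunct2, THEN conjunct2, THEN conjunct2] by blast

lemma in_Tr: "U \<in> tests T A B \<Longrightarrow> u \<in> set U \<Longrightarrow> u \<in> Tr T A B"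
  unfolding Tr_def by blast

lemma seq_in_test:
  assumes "U \<in> tests T A B" "V \<in> tests T B C" "u \<in> set U" "v \<in> set V"
  shows "seqc T v u \<in> set [seqc T v u. u \<leftarrow> U, v \<leftarrow> V]"
  using assms by auto

lemma seq_Tr:
  assumes "u \<in> Tr T A B" "v \<in> Tr T B C"
  shows "seqc T v u \<in> Tr T A C"
proof -
  obtain U V where "U \<in> tests T A B" "u \<in> set U" "V \<in> tests T B C" "v \<in> set V"
    using assms unfolding Tr_def by blast
  moreover have "seqc T v u \<in> set [seqc T v u. u \<leftarrow> U, v \<leftarrow> V]" using calculation by auto
  ultimately show ?thesis unfolding Tr_def using seq_test by blast
qed

lemma pair_bounds:
  assumes a: "a \<in> Eff T S" and x: "x \<in> St T S"
  shows "0 \<le> pair T a x" "pair T a x \<le> 1"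
proof -
  obtain Ua Ux where ua: "Ua \<in> tests T S (unitS T)" "a \<in> set Ua"
     and ux: "Ux \<in> tests T (unitS T) S" "x \<in> set Ux"
    using a x unfolding Eff_def St_def Tr_def by blast
  let ?W = "[seqc T v u. u \<leftarrow> Ux, v \<leftarrow> Ua]"
  have W: "?W \<in> tests T (unitS T) (unitS T)" using seq_test ux ua by blast
  have mem: "seqc T a x \<in> set ?W" using ua ux by auto
  from prob_test[OF W] have nn: "\<forall>t\<in>set ?W. 0 \<le> prob T t" and s1: "sum_list (map (prob T) ?W) = 1"
    by auto
  show "0 \<le> pair T a x" unfolding pair_def using nn mem by blast
  have "prob T (seqc T a x) \<le> sum_list (map (prob T) ?W)"
    by (rule member_le_sum_list) (use mem nn in auto)
  then show "pair T a x \<le> 1" unfolding pair_def using s1 by simp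
qed

lemma circ_pair:
  assumes f: "f \<in> Tr T S (unitS T)" and psi: "psi \<in> St T S"
  shows "circ T (unitS T) (idt T (unitS T)) f psi = pair T f psi"
proof -
  have "seqc T f psi \<in> Tr T (unitS T) (unitS T)"
    using seq_Tr[of psi "unitS T" S f "unitS T"] f psi unfolding St_def by blast
  then show ?thesis unfolding circ_def pair_def using par_id_unit[OF f] seq_id by simp
qed

lemma coarse_eff:
  assumes U: "U \<in> tests T S (unitS T)" and c: "\<forall>i<length U. c i < k"
  shows "\<exists>V\<in>tests T S (unitS T). length V = k \<and>
     (\<forall>l<k. \<forall>psi\<in>St T S. pair T (V ! l) psi = (\<Sum>i\<in>{i. i < length U \<and> c i = l}. pair T (U ! i) psi))"
proof -
  obtain V where V: "V \<in> tests T S (unitS T)" "length V = k"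
    and cg: "\<forall>l<k. \<forall>C psi b. psi \<in> St T (tensS T S C) \<longrightarrow> b \<in> Eff T (tensS T (unitS T) C) \<longrightarrow>
             circ T C b (V ! l) psi = (\<Sum>i\<in>{i. i < length U \<and> c i = l}. circ T C b (U ! i) psi)"
    using coarse[OF U c] by blast
  have b: "idt T (unitS T) \<in> Eff T (tensS T (unitS T) (unitS T))"
    using id_test[of "unitS T"] unfolding Eff_def Tr_def tens_unit by force
  show ?thesis
  proof (intro bexI[OF _ V(1)] conjI V(2) allI impI ballI)
    fix l psi assume l: "l < k" and psi: "psi \<in> St T S"
    have psi': "psi \<in> St T (tensS T S (unitS T))" using psi tens_unit by simp
    have "circ T (unitS T) (idt T (unitS T)) (V ! l) psi
        = (\<Sum>i\<in>{i. i < length U \<and> c i = l}. circ T (unitS T) (idt T (unitS T)) (U ! i) psi)"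
      using cg l psi' b by blast
    moreover have "circ T (unitS T) (idt T (unitS T)) (V ! l) psi = pair T (V ! l) psi"
      using circ_pair[OF _ psi] in_Tr[OF V(1)] l V(2) by simp
    moreover have "circ T (unitS T) (idt T (unitS T)) (U ! i) psi = pair T (U ! i) psi"
      if "i \<in> {i. i < length U \<and> c i = l}" for i
      using circ_pair[OF _ psi] in_Tr[OF U] that by simp
    ultimately show "pair T (V ! l) psi = (\<Sum>i\<in>{i. i < length U \<and> c i = l}. pair T (U ! i) psi)"
      by simp
  qed
qed

end




lemma sum_list_concat_map_nth:
  fixes f :: "'b \<Rightarrow> real"
  shows "sum_list (map f [g u v. u \<leftarrow> U, v \<leftarrow> V]) = (\<Sum>i<length U. \<Sum>j<length V. f (g (U ! i) (V ! j)))"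
proof (induction U)
  case Nil then show ?case by simp
next
  case (Cons a U)
  have "sum_list (map f (map (g a) V)) = (\<Sum>j<length V. f (g a (V ! j)))"
    by (simp add: sum_list_sum_nth atLeast0LessThan)
  then show ?case using Cons by (simp add: sum.lessThan_Suc_shift del: sum.lessThan_Suc)
qed

context
  fixes T :: "('s, 't) opt"
  assumes opt: "is_opt T" and sc: "strongly_causal T"
begin

lemma detE_eq: "[e] \<in> tests T S (unitS T) \<Longrightarrow> detE T S = e"
proof -
  assume e: "[e] \<in> tests T S (unitS T)"
  have "\<exists>!e. [e] \<in> tests T S (unitS T)" using sc unfolding strongly_causal_def by blast
  then show ?thesis unfolding detE_def using e by (rule the1_equality)
qed

lemma detE_Eff: "detE T S \<in> Eff T S"
proof -
  obtain e where e: "[e] \<in> tests T S (unitS T)" using sc unfolding strongly_causal_def by blast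
  then show ?thesis using detE_eq[OF e] unfolding Eff_def Tr_def by force
qed

lemma detE_pair:
  assumes U: "U \<in> tests T S (unitS T)" and psi: "psi \<in> St T S"
  shows "pair T (detE T S) psi = (\<Sum>i<length U. pair T (U ! i) psi)"
proof -
  obtain V where V: "V \<in> tests T S (unitS T)" "length V = 1"
    and cg: "\<forall>l<1. \<forall>psi\<in>St T S. pair T (V ! l) psi = (\<Sum>i\<in>{i. i < length U \<and> (\<lambda>_. 0::nat) i = l}. pair T (U ! i) psi)"
    using coarse_eff[OF opt U, of "\<lambda>_. 0" 1] by auto
  obtain w where w: "V = [w]" using V(2) by (cases V) auto
  have "detE T S = w" using detE_eq V(1) w by simp
  moreover have "{i. i < length U \<and> (\<lambda>_. 0::nat) i = 0} = {..<length U}" by auto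
  ultimately show ?thesis using cg psi w by simp
qed

lemma opnorm_lower:
  assumes U: "U \<in> tests T S (unitS T)" and x: "x \<in> St T S" and y: "y \<in> St T S"
  shows "(\<Sum>j<length U. \<bar>pair T (U ! j) x - pair T (U ! j) y\<bar>) \<le> opnorm_diff T S x y"
proof -
  define d where "d j = pair T (U ! j) x - pair T (U ! j) y" for j
  define c where "c j = (if d j > 0 then 0 else 1::nat)" for j
  obtain V where V: "V \<in> tests T S (unitS T)" "length V = 2"
    and cg: "\<forall>l<2. \<forall>psi\<in>St T S. pair T (V ! l) psi = (\<Sum>i\<in>{i. i < length U \<and> c i = l}. pair T (U ! i) psi)"
  proof -
    have c2: "\<forall>i<length U. c i < 2" unfolding c_def by simp
    show ?thesis using coarse_eff[OF opt U c2] that by blast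
  qed
  let ?J = "{i. i < length U \<and> c i = 0}"
  have J: "?J = {..<length U} \<inter> {j. d j > 0}" unfolding c_def by auto
  have a: "V ! 0 \<in> Eff T S" using V unfolding Eff_def Tr_def by force
  let ?f = "\<lambda>a. (2 * pair T a x - pair T (detE T S) x) - (2 * pair T a y - pair T (detE T S) y)"
  have bdd: "bdd_above (?f ` Eff T S)"
  proof (rule bdd_aboveI2)
    fix a assume "a \<in> Eff T S"
    then show "?f a \<le> 3"
      using pair_bounds[OF opt _ x] pair_bounds[OF opt _ y] detE_Eff by (smt (verit))
  qed
  have "?f (V ! 0) \<le> opnorm_diff T S x y"
    unfolding opnorm_diff_def by (rule cSup_upper[OF imageI[OF a] bdd])
  moreover have "?f (V ! 0) = (\<Sum>j<length U. \<bar>d j\<bar>)"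
  proof -
    have P: "pair T (V ! 0) x - pair T (V ! 0) y = (\<Sum>j\<in>{..<length U} \<inter> {j. d j > 0}. d j)"
      using cg x y J unfolding d_def by (simp add: sum_subtractf)
    have E: "pair T (detE T S) x - pair T (detE T S) y = (\<Sum>j<length U. d j)"
      using detE_pair[OF U x] detE_pair[OF U y] unfolding d_def by (simp add: sum_subtractf)
    have sd: "(\<Sum>j<length U. d j) = (\<Sum>j\<in>{..<length U} \<inter> {j. d j > 0}. d j) + (\<Sum>j\<in>{..<length U} \<inter> - {j. d j > 0}. d j)"
      using sum.If_cases[of "{..<length U}" "\<lambda>j. d j > 0" d d] by simp
    have sa: "(\<Sum>j<length U. \<bar>d j\<bar>) = (\<Sum>j\<in>{..<length U} \<inter> {j. d j > 0}. d j) + (\<Sum>j\<in>{..<length U} \<inter> - {j. d j > 0}. - d j)"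
    proof -
      have "(\<Sum>j<length U. \<bar>d j\<bar>) = (\<Sum>j<length U. if d j > 0 then d j else - d j)"
        by (intro sum.cong) auto
      then show ?thesis using sum.If_cases[of "{..<length U}" "\<lambda>j. d j > 0" d "\<lambda>j. - d j"] by simp
    qed
    show ?thesis using P E sd sa by (simp add: sum_negf)
  qed
  ultimately show ?thesis unfolding d_def by simp
qed

lemma test_joint:
  assumes U: "U \<in> tests T (unitS T) S" and V: "V \<in> tests T S (unitS T)"
  shows "(\<Sum>i<length U. \<Sum>j<length V. pair T (V ! j) (U ! i)) = 1"
    "\<And>i j. i < length U \<Longrightarrow> j < length V \<Longrightarrow> 0 \<le> pair T (V ! j) (U ! i)"
proof -
  let ?W = "[seqc T v u. u \<leftarrow> U, v \<leftarrow> V]"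
  have W: "?W \<in> tests T (unitS T) (unitS T)" using seq_test[OF opt U V] .
  have "sum_list (map (prob T) ?W) = (\<Sum>i<length U. \<Sum>j<length V. prob T (seqc T (V ! j) (U ! i)))"
    by (rule sum_list_concat_map_nth)
  then show "(\<Sum>i<length U. \<Sum>j<length V. pair T (V ! j) (U ! i)) = 1"
    using prob_test[OF opt W] unfolding pair_def by simp
  show "0 \<le> pair T (V ! j) (U ! i)" if "i < length U" "j < length V" for i j
    using pair_bounds[OF opt, of "V ! j" S "U ! i"] that U V unfolding Eff_def St_def Tr_def by force
qed

end




lemma mi_cong:
  assumes "\<And>i j. i < n \<Longrightarrow> j < m \<Longrightarrow> p i j = q i j"
  shows "mutual_info n m p = mutual_info n m q"
proof -
  have r: "(\<Sum>j'<m. p i j') = (\<Sum>j'<m. q i j')" if "i < n" for i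
    using assms that by (intro sum.cong) auto
  have c: "(\<Sum>i'<n. p i' j) = (\<Sum>i'<n. q i' j)" if "j < m" for j
    using assms that by (intro sum.cong) auto
  show ?thesis unfolding mutual_info_def
    by (intro sum.cong refl) (simp add: assms r c)
qed

context
  fixes T :: "('s, 't) opt"
  assumes opt: "is_opt T" and sc: "strongly_causal T"
begin

lemma Phi_test:
  assumes "(E, D) \<in> schemes T Ob A N M"
  shows "[parc T (seqc T D E) (idt T C)] \<in> tests T (tensS T (spow T A N) C) (tensS T (spow T A N) C)"
proof -
  have E: "[E] \<in> tests T (spow T A N) (spow T Ob M)" and D: "[D] \<in> tests T (spow T Ob M) (spow T A N)"
    using assms unfolding schemes_def Tr1_def by auto
  have "[seqc T v u. u \<leftarrow> [E], v \<leftarrow> [D]] \<in> tests T (spow T A N) (spow T A N)"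
    by (rule seq_test[OF opt E D])
  then have DE: "[seqc T D E] \<in> tests T (spow T A N) (spow T A N)" by simp
  have "[parc T u v. u \<leftarrow> [seqc T D E], v \<leftarrow> [idt T C]] \<in> tests T (tensS T (spow T A N) C) (tensS T (spow T A N) C)"
    by (rule par_test[OF opt DE id_test[OF opt]])
  then show ?thesis by simp
qed

lemma setup_ref:
  assumes "(C, Ps, As) \<in> classical_setups T A rho N"
  shows "(C, Ps) \<in> refs_of_dil T A rho N"
proof -
  have Ps: "Ps \<in> tests T (unitS T) (tensS T (spow T A N) C)"
    and Om: "\<exists>Om. is_dilation T (spow T A N) C Om (tpow T rho N) \<and>
           sums_to T (tensS T (spow T A N) C) Ps Om"
    using assms unfolding classical_setups_def by auto
  have "\<exists>idx. distinct idx \<and> set idx \<subseteq> {..<length Ps} \<and> Ps = map (\<lambda>i. Ps ! i) idx"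
    by (intro exI[of _ "[0..<length Ps]"]) (auto simp: map_nth)
  then show ?thesis using Ps Om unfolding refs_of_dil_def is_refinement_def by blast
qed

lemma eset_sub:
  assumes d0: "0 < delta"
    and EDin: "(E, D) \<in> Eset T Ob A rho N M (min 1 ((delta / 26)\<^sup>2))"
  shows "(E, D) \<in> EsetC T Ob A rho N M delta"
proof -
  define eps where "eps = min 1 ((delta / 26)\<^sup>2)"
  have sch: "(E, D) \<in> schemes T Ob A N M"
    and supE: "(SUP p\<in>refs_of_dil T A rho N.
        ereal (\<Sum>Psi\<leftarrow>snd p. opnorm_diff T (tensS T (spow T A N) (fst p))
                 (seqc T (parc T (seqc T D E) (idt T (fst p))) Psi) Psi)) < ereal eps"
    using EDin unfolding Eset_def eps_def by auto
  have e1: "eps \<le> 1" unfolding eps_def by simp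
  have eD: "13 * sqrt eps \<le> delta / 2"
  proof -
    have "eps \<le> (delta / 26)\<^sup>2" unfolding eps_def by simp
    then have "sqrt eps \<le> sqrt ((delta / 26)\<^sup>2)" by (rule real_sqrt_le_mono)
    also have "\<dots> = delta / 26" using d0 by simp
    finally show ?thesis by simp
  qed
  have each: "mi_gap T E D C Ps As \<le> delta / 2" if s: "(C, Ps, As) \<in> classical_setups T A rho N" for C Ps As
  proof -
    define S where "S = tensS T (spow T A N) C"
    define Phi where "Phi = parc T (seqc T D E) (idt T C)"
    have Ps: "Ps \<in> tests T (unitS T) S" and As: "As \<in> tests T S (unitS T)"
      and n2: "2 \<le> length Ps" and m2: "2 \<le> length As"
      using s unfolding classical_setups_def S_def by auto
    have Phi: "[Phi] \<in> tests T S S" unfolding Phi_def S_def by (rule Phi_test[OF sch])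
    let ?Qs = "[seqc T v u. u \<leftarrow> Ps, v \<leftarrow> [Phi]]"
    have Qs: "?Qs \<in> tests T (unitS T) S" by (rule seq_test[OF opt Ps Phi])
    have Qeq: "?Qs = map (seqc T Phi) Ps" by (induction Ps) auto
    have lenQ: "length ?Qs = length Ps" using Qeq by simp
    have nthQ: "?Qs ! i = seqc T Phi (Ps ! i)" if "i < length Ps" for i using Qeq that by simp
    have PsSt: "Ps ! i \<in> St T S" if "i < length Ps" for i
      using Ps that unfolding St_def Tr_def by force
    have QsSt: "seqc T Phi (Ps ! i) \<in> St T S" if "i < length Ps" for i
      using Qs that lenQ nthQ[OF that] unfolding St_def Tr_def by (metis (mono_tags, lifting) mem_Collect_eq nth_mem)
    have ref: "(C, Ps) \<in> refs_of_dil T A rho N" by (rule setup_ref[OF s])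
    have Aup: "ereal (\<Sum>Psi\<leftarrow>Ps. opnorm_diff T S (seqc T Phi Psi) Psi) \<le> (SUP p\<in>refs_of_dil T A rho N.
        ereal (\<Sum>Psi\<leftarrow>snd p. opnorm_diff T (tensS T (spow T A N) (fst p))
                 (seqc T (parc T (seqc T D E) (idt T (fst p))) Psi) Psi))"
      by (rule SUP_upper2[OF ref]) (simp add: S_def Phi_def)
    have "ereal (\<Sum>Psi\<leftarrow>Ps. opnorm_diff T S (seqc T Phi Psi) Psi) < ereal eps"
      using Aup supE by (rule le_less_trans)
    then have sumlt: "(\<Sum>i<length Ps. opnorm_diff T S (seqc T Phi (Ps ! i)) (Ps ! i)) < eps"
      by (simp add: sum_list_sum_nth atLeast0LessThan)
    define p where "p i j = pair T (As ! j) (Ps ! i)" for i j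
    define q where "q i j = pair T (As ! j) (seqc T Phi (Ps ! i))" for i j
    have tv: "(\<Sum>i<length Ps. \<Sum>j<length As. \<bar>p i j - q i j\<bar>) \<le> eps"
    proof -
      have "(\<Sum>i<length Ps. \<Sum>j<length As. \<bar>p i j - q i j\<bar>)
          \<le> (\<Sum>i<length Ps. opnorm_diff T S (seqc T Phi (Ps ! i)) (Ps ! i))"
      proof (intro sum_mono)
        fix i assume i: "i \<in> {..<length Ps}"
        have "(\<Sum>j<length As. \<bar>p i j - q i j\<bar>) = (\<Sum>j<length As. \<bar>pair T (As ! j) (seqc T Phi (Ps ! i)) - pair T (As ! j) (Ps ! i)\<bar>)"
          unfolding p_def q_def by (simp add: abs_minus_commute)
        also have "\<dots> \<le> opnorm_diff T S (seqc T Phi (Ps ! i)) (Ps ! i)"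
          using i by (intro opnorm_lower[OF opt sc] As QsSt PsSt) auto
        finally show "(\<Sum>j<length As. \<bar>p i j - q i j\<bar>) \<le> opnorm_diff T S (seqc T Phi (Ps ! i)) (Ps ! i)" .
      qed
      then show ?thesis using sumlt by linarith
    qed
    have pn: "0 \<le> p i j" if "i < length Ps" "j < length As" for i j
      unfolding p_def using test_joint(2)[OF opt sc Ps As] that by blast
    have p1: "(\<Sum>i<length Ps. \<Sum>j<length As. p i j) = 1"
      unfolding p_def using test_joint(1)[OF opt sc Ps As] by blast
    have qn: "0 \<le> q i j" if "i < length Ps" "j < length As" for i j
      unfolding q_def using test_joint(2)[OF opt sc Qs As, of i j] that lenQ nthQ by simp
    have q1: "(\<Sum>i<length Ps. \<Sum>j<length As. q i j) = 1"
    proof -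
      have "(\<Sum>i<length ?Qs. \<Sum>j<length As. pair T (As ! j) (?Qs ! i)) = 1"
        by (rule test_joint(1)[OF opt sc Qs As])
      moreover have "(\<Sum>i<length ?Qs. \<Sum>j<length As. pair T (As ! j) (?Qs ! i))
          = (\<Sum>i<length Ps. \<Sum>j<length As. q i j)"
        unfolding lenQ q_def by (intro sum.cong refl) (simp add: nthQ)
      ultimately show ?thesis by simp
    qed
    have "\<bar>mutual_info (length Ps) (length As) p - mutual_info (length Ps) (length As) q\<bar>
        / log 2 (real (length As * length Ps) - 1) \<le> 13 * sqrt eps"
      by (rule mi_cont[OF n2 m2 pn qn p1 q1 tv e1])
    then have "mi_gap T E D C Ps As \<le> 13 * sqrt eps"
      unfolding mi_gap_def Let_def p_def q_def Phi_def by simp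
    then show ?thesis using eD by linarith
  qed
  have "(SUP s\<in>classical_setups T A rho N. ereal (mi_gap T E D (fst s) (fst (snd s)) (snd (snd s))))
      \<le> ereal (delta / 2)"
    by (rule SUP_least) (use each in auto)
  also have "\<dots> < ereal delta" using d0 by simp
  finally show ?thesis using sch unfolding EsetC_def by auto
qed

end




lemma sum_list_map_zero: "(\<And>x. x \<in> set xs \<Longrightarrow> f x = (0::real)) \<Longrightarrow> sum_list (map f xs) = 0"
  by (induction xs) auto


context
  fixes T :: "('s, 't) opt"
  assumes opt: "is_opt T" and sc: "strongly_causal T"
begin

lemma digital_scheme:
  assumes dig: "digitalizable T Ob"
  shows "\<exists>M. \<exists>E D. (E, D) \<in> schemes T Ob A N M \<and> seqc T D E = idt T (spow T A N)"
  using dig unfolding digitalizable_def schemes_def by blast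

lemma Eset_ne:
  assumes dig: "digitalizable T Ob" and e0: "0 < eps"
  shows "\<exists>M. Eset T Ob A rho N M eps \<noteq> {}"
proof -
  obtain M E D where sch: "(E, D) \<in> schemes T Ob A N M" and id: "seqc T D E = idt T (spow T A N)"
    using digital_scheme[OF dig] by blast
  have zero: "(\<Sum>Psi\<leftarrow>snd p. opnorm_diff T (tensS T (spow T A N) (fst p))
                 (seqc T (parc T (seqc T D E) (idt T (fst p))) Psi) Psi) = 0"
    if p: "p \<in> refs_of_dil T A rho N" for p
  proof -
    obtain C Ps where pe: "p = (C, Ps)" by (cases p)
    define S where "S = tensS T (spow T A N) C"
    obtain U idx where U: "U \<in> tests T (unitS T) S" and idx: "set idx \<subseteq> {..<length U}"
      and Pseq: "Ps = map (\<lambda>i. U ! i) idx"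
      using p unfolding pe refs_of_dil_def is_refinement_def S_def by blast
    have "opnorm_diff T S (seqc T (parc T (seqc T D E) (idt T C)) Psi) Psi = 0" if Psi: "Psi \<in> set Ps" for Psi
    proof -
      have PsiTr: "Psi \<in> Tr T (unitS T) S" using Psi U idx unfolding Pseq Tr_def by force
      have "seqc T (parc T (seqc T D E) (idt T C)) Psi = Psi"
        using id par_idt[OF opt] seq_id[OF opt PsiTr] unfolding S_def by simp
      moreover have "Eff T S \<noteq> {}" using detE_Eff[OF opt sc] by blast
      ultimately show ?thesis unfolding opnorm_diff_def by simp
    qed
    then show ?thesis unfolding pe S_def by (simp add: sum_list_map_zero)
  qed
  have "(SUP p\<in>refs_of_dil T A rho N.
        ereal (\<Sum>Psi\<leftarrow>snd p. opnorm_diff T (tensS T (spow T A N) (fst p))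
                 (seqc T (parc T (seqc T D E) (idt T (fst p))) Psi) Psi)) \<le> 0"
    by (rule SUP_least) (simp add: zero)
  also have "\<dots> < ereal eps" using e0 by simp
  finally have "(E, D) \<in> Eset T Ob A rho N M eps" using sch unfolding Eset_def by auto
  then show ?thesis by blast
qed

lemma EsetC_ne:
  assumes dig: "digitalizable T Ob" and e0: "0 < delta"
  shows "\<exists>M. EsetC T Ob A rho N M delta \<noteq> {}"
proof -
  obtain M E D where sch: "(E, D) \<in> schemes T Ob A N M" and id: "seqc T D E = idt T (spow T A N)"
    using digital_scheme[OF dig] by blast
  have zero: "mi_gap T E D (fst s) (fst (snd s)) (snd (snd s)) = 0"
    if s: "s \<in> classical_setups T A rho N" for s
  proof -
    obtain C Ps As where se: "s = (C, Ps, As)" by (cases s) auto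
    define S where "S = tensS T (spow T A N) C"
    have Ps: "Ps \<in> tests T (unitS T) S" using s unfolding se classical_setups_def S_def by auto
    have eq: "seqc T (parc T (seqc T D E) (idt T C)) (Ps ! i) = Ps ! i" if "i < length Ps" for i
    proof -
      have PsiTr: "Ps ! i \<in> Tr T (unitS T) S" using Ps that unfolding Tr_def by force
      show ?thesis using id par_idt[OF opt] seq_id[OF opt PsiTr] unfolding S_def by simp
    qed
    have "mutual_info (length Ps) (length As) (\<lambda>i j. pair T (As ! j) (seqc T (parc T (seqc T D E) (idt T C)) (Ps ! i)))
        = mutual_info (length Ps) (length As) (\<lambda>i j. pair T (As ! j) (Ps ! i))"
      by (rule mi_cong) (simp add: eq)
    then show ?thesis unfolding se mi_gap_def Let_def by simp
  qed
  have "(SUP s\<in>classical_setups T A rho N. ereal (mi_gap T E D (fst s) (fst (snd s)) (snd (snd s)))) \<le> 0"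
    by (rule SUP_least) (simp add: zero)
  also have "\<dots> < ereal delta" using e0 by simp
  finally have "(E, D) \<in> EsetC T Ob A rho N M delta" using sch unfolding EsetC_def by auto
  then show ?thesis by blast
qed

end

theorem mainTheorem7:
  fixes T :: "('s, 't) opt" and Ob A :: 's and rho :: 't
  assumes "is_opt T"
    and "strongly_causal T"
    and "digitalizable T Ob"
    and "rho \<in> St1 T A"
  shows "infoC T Ob A rho \<le> info T Ob A rho"
proof -
  note opt = assms(1) and sc = assms(2) and dig = assms(3)
  define hf where "hf eps = limsup (\<lambda>N. ereal (real (Inf {M. Eset T Ob A rho N M eps \<noteq> {}}) / real N))" for eps
  define hg where "hg delta = limsup (\<lambda>N. ereal (real (Inf {M. EsetC T Ob A rho N M delta \<noteq> {}}) / real N))" for delta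
  have monof: "hf y \<le> hf x" if "0 < x" "x \<le> y" for x y
    unfolding hf_def
  proof (rule limsup_Inf_mono)
    show "Eset T Ob A rho N M y \<noteq> {}" if "Eset T Ob A rho N M x \<noteq> {}" for N M
    proof -
      have xy: "ereal x \<le> ereal y" using \<open>x \<le> y\<close> by simp
      show ?thesis using that xy unfolding Eset_def by (blast intro: less_le_trans)
    qed
    show "\<exists>M. Eset T Ob A rho N M x \<noteq> {}" for N using Eset_ne[OF opt sc dig \<open>0 < x\<close>] .
  qed
  have monog: "hg y \<le> hg x" if "0 < x" "x \<le> y" for x y
    unfolding hg_def
  proof (rule limsup_Inf_mono)
    show "EsetC T Ob A rho N M y \<noteq> {}" if "EsetC T Ob A rho N M x \<noteq> {}" for N M
    proof -
      have xy: "ereal x \<le> ereal y" using \<open>x \<le> y\<close> by simp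
      show ?thesis using that xy unfolding EsetC_def by (blast intro: less_le_trans)
    qed
    show "\<exists>M. EsetC T Ob A rho N M x \<noteq> {}" for N using EsetC_ne[OF opt sc dig \<open>0 < x\<close>] .
  qed
  have I: "info T Ob A rho = (SUP e\<in>{0<..}. hf e)"
    unfolding info_def hf_def[symmetric] by (rule Lim_antitone) (rule monof)
  have IC: "infoC T Ob A rho = (SUP e\<in>{0<..}. hg e)"
    unfolding infoC_def hg_def[symmetric] by (rule Lim_antitone) (rule monog)
  have "(SUP e\<in>{0<..}. hg e) \<le> (SUP e\<in>{0<..}. hf e)"
  proof (rule SUP_mono)
    fix d :: real assume "d \<in> {0<..}"
    then have d0: "0 < d" by simp
    define e where "e = min 1 ((d / 26)\<^sup>2)"
    have e0: "0 < e" unfolding e_def using d0 by simp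
    have "hg d \<le> hf e" unfolding hg_def hf_def
    proof (rule limsup_Inf_mono)
      show "EsetC T Ob A rho N M d \<noteq> {}" if ne: "Eset T Ob A rho N M e \<noteq> {}" for N M
      proof -
        obtain z where z: "z \<in> Eset T Ob A rho N M e" using ne by blast
        obtain E D where zE: "z = (E, D)" by (cases z)
        have "(E, D) \<in> EsetC T Ob A rho N M d"
          using eset_sub[OF opt sc d0] z zE unfolding e_def by blast
        then show ?thesis by blast
      qed
      show "\<exists>M. Eset T Ob A rho N M e \<noteq> {}" for N using Eset_ne[OF opt sc dig e0] .
    qed
    then show "\<exists>m\<in>{0<..}. hg d \<le> hf m" using e0 by auto
  qed
  then show ?thesis using I IC by simp
qed


end
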